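(* (1) There exists an infinite family of connected subcubic graphs $G$, each containing a pair of open twins of degree $1$, such that $\gamma^{LD}(G)>\frac{n(G)}{2}$. (2) There exists an infinite family of connected subcubic graphs $G$, each containing a pair of open twins of degree $2$, such that $\gamma^{LD}(G)>\frac{n(G)}{2}$.
   Context: All graphs are finite and simple; $n(G)$ is the number of vertices. A graph is subcubic if every vertex has degree at most $3$. Two distinct vertices $u,v$ are open twins of degree $d$ if $N(u)=N(v)$ and $|N(u)|=d$. For $S\subseteq V(G)$, $I(v)=N[v]\cap S$. A set $S$ is locating-dominating if every vertex $v$ has $I(v)\ne\emptyset$ and $I(u)\neq I(v)$ for all distinct $u,v\in V(G)\setminus S$. $\gamma^{LD}(G)$ denotes the minimum size of a locating-dominating set of $G$. *)

theory Defs
  imports Main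
begin

definition simple_graph :: "'a set \<Rightarrow> ('a \<Rightarrow> 'a \<Rightarrow> bool) \<Rightarrow> bool" where
  "simple_graph V E \<longleftrightarrow> finite V \<and> (\<forall>u v. E u v \<longrightarrow> u \<in> V \<and> v \<in> V)
     \<and> (\<forall>u v. E u v \<longrightarrow> E v u) \<and> (\<forall>v. \<not> E v v)"

definition nbhd :: "'a set \<Rightarrow> ('a \<Rightarrow> 'a \<Rightarrow> bool) \<Rightarrow> 'a \<Rightarrow> 'a set" where
  "nbhd V E v = {u \<in> V. E v u}"

definition closed_nbhd :: "'a set \<Rightarrow> ('a \<Rightarrow> 'a \<Rightarrow> bool) \<Rightarrow> 'a \<Rightarrow> 'a set" where
  "closed_nbhd V E v = insert v (nbhd V E v)"

definition subcubic :: "'a set \<Rightarrow> ('a \<Rightarrow> 'a \<Rightarrow> bool) \<Rightarrow> bool" where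
  "subcubic V E \<longleftrightarrow> (\<forall>v\<in>V. card (nbhd V E v) \<le> 3)"

definition connected_graph :: "'a set \<Rightarrow> ('a \<Rightarrow> 'a \<Rightarrow> bool) \<Rightarrow> bool" where
  "connected_graph V E \<longleftrightarrow> V \<noteq> {} \<and> (\<forall>u\<in>V. \<forall>v\<in>V. E\<^sup>*\<^sup>* u v)"

definition open_twins :: "'a set \<Rightarrow> ('a \<Rightarrow> 'a \<Rightarrow> bool) \<Rightarrow> nat \<Rightarrow> 'a \<Rightarrow> 'a \<Rightarrow> bool" where
  "open_twins V E d u v \<longleftrightarrow> u \<in> V \<and> v \<in> V \<and> u \<noteq> v \<and>
     nbhd V E u = nbhd V E v \<and> card (nbhd V E u) = d"

definition locating_dominating :: "'a set \<Rightarrow> ('a \<Rightarrow> 'a \<Rightarrow> bool) \<Rightarrow> 'a set \<Rightarrow> bool" where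
  "locating_dominating V E S \<longleftrightarrow> S \<subseteq> V \<and>
     (\<forall>v\<in>V. closed_nbhd V E v \<inter> S \<noteq> {}) \<and>
     (\<forall>u\<in>V - S. \<forall>v\<in>V - S. u \<noteq> v \<longrightarrow> closed_nbhd V E u \<inter> S \<noteq> closed_nbhd V E v \<inter> S)"

definition ld_number :: "'a set \<Rightarrow> ('a \<Rightarrow> 'a \<Rightarrow> bool) \<Rightarrow> nat" where
  "ld_number V E = (LEAST k. \<exists>S. locating_dominating V E S \<and> card S = k)"

end

theory Submission imports Defs begin
definition Bm :: "nat \<Rightarrow> nat \<Rightarrow> nat \<Rightarrow> bool" where
  "Bm m u v \<longleftrightarrow> v < 4*m+11 \<and>
    ((u=0\<and>v=1) \<or> (u=0\<and>v=2) \<or> (u=0\<and>v=3) \<or> (u=3\<and>v=4) \<or> (u=3\<and>v=5) \<or>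
     (u=4\<and>v=6) \<or> (u=5\<and>v=6) \<or> (u=6\<and>v=7) \<or>
     (7 \<le> u \<and> u mod 4 = 3 \<and> (v=u+1 \<or> v=u+4)) \<or>
     (8 \<le> u \<and> u mod 4 = 0 \<and> (v=u+1 \<or> v=u+2)))"
definition Em :: "nat \<Rightarrow> nat \<Rightarrow> nat \<Rightarrow> bool" where
  "Em m u v \<longleftrightarrow> Bm m u v \<or> Bm m v u"
definition Vm :: "nat \<Rightarrow> nat set" where
  "Vm m = {..<4*m+11}"

lemma decomp:
  assumes "(v::nat) < 4*m+11"
  shows "v \<le> 6 \<or> (\<exists>k\<le>m. v = 7+4*k \<or> v = 8+4*k \<or> v = 9+4*k \<or> v = 10+4*k)"
proof (cases "v \<le> 6")
  case False
  define k :: nat where "k = (v-7) div 4"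
  define r where "r = (v-7) mod 4"
  have e: "v = 7 + 4*k + r" using False unfolding k_def r_def by simp
  have "r < 4" unfolding r_def by simp
  then have "r = 0 \<or> r = 1 \<or> r = 2 \<or> r = 3" by auto
  moreover have "k \<le> m" using e assms by simp
  ultimately show ?thesis using e by auto
qed simp

lemma nb_c0: "nbhd (Vm m) (Em m) 7 \<subseteq> {6,8,11}"
  unfolding nbhd_def Vm_def Em_def Bm_def by auto
lemma nb_c: "nbhd (Vm m) (Em m) (11+4*j) \<subseteq> {7+4*j,12+4*j,15+4*j}"
  unfolding nbhd_def Vm_def Em_def Bm_def by (auto; presburger)
lemma nb_z: "nbhd (Vm m) (Em m) (8+4*j) \<subseteq> {7+4*j,9+4*j,10+4*j}"
  unfolding nbhd_def Vm_def Em_def Bm_def by (auto; presburger)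
lemma par_c: "j < m \<Longrightarrow> Em m (7+4*j) (11+4*j)"
  unfolding Em_def Bm_def by simp
lemma par_z: "j \<le> m \<Longrightarrow> Em m (7+4*j) (8+4*j)"
  unfolding Em_def Bm_def by simp
lemma par_l1: "j \<le> m \<Longrightarrow> Em m (8+4*j) (9+4*j)"
  unfolding Em_def Bm_def by simp
lemma par_l2: "j \<le> m \<Longrightarrow> Em m (8+4*j) (10+4*j)"
  unfolding Em_def Bm_def by simp

lemma nb_fixed:
  "nbhd (Vm m) (Em m) 0 \<subseteq> {1,2,3}" "nbhd (Vm m) (Em m) 1 \<subseteq> {0,0,0}"
  "nbhd (Vm m) (Em m) 2 \<subseteq> {0,0,0}" "nbhd (Vm m) (Em m) 3 \<subseteq> {0,4,5}"
  "nbhd (Vm m) (Em m) 4 \<subseteq> {3,6,6}" "nbhd (Vm m) (Em m) 5 \<subseteq> {3,6,6}"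
  "nbhd (Vm m) (Em m) 6 \<subseteq> {4,5,7}"
  unfolding nbhd_def Vm_def Em_def Bm_def by auto

lemma leaf1: "i \<le> m \<Longrightarrow> nbhd (Vm m) (Em m) (9+4*i) = {8+4*i}"
  unfolding nbhd_def Vm_def Em_def Bm_def by (auto; presburger)

lemma leaf2: "i \<le> m \<Longrightarrow> nbhd (Vm m) (Em m) (10+4*i) = {8+4*i}"
  unfolding nbhd_def Vm_def Em_def Bm_def by (auto; presburger)

lemma fixed_nb:
  "nbhd (Vm m) (Em m) 1 = {0}" "nbhd (Vm m) (Em m) 2 = {0}"
  "nbhd (Vm m) (Em m) 4 = {3,6}" "nbhd (Vm m) (Em m) 5 = {3,6}"
  unfolding nbhd_def Vm_def Em_def Bm_def by auto

lemma fixed_nb1: "nbhd (Vm m) (Em m) (Suc 0) = {0}"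
  using fixed_nb(1) by simp

lemma inVm: "x < 4*m+11 \<Longrightarrow> x \<in> Vm m"
  unfolding Vm_def by simp

lemma sg: "simple_graph (Vm m) (Em m)"
  unfolding simple_graph_def Vm_def Em_def Bm_def by auto

lemma card3: "card {a,b,c::nat} \<le> 3"
  by (simp add: card_insert_if)

lemma le3: "N \<subseteq> {a,b,c::nat} \<Longrightarrow> card N \<le> 3"
  by (meson card3 card_mono finite.emptyI finite.insertI le_trans)

lemma subc: "subcubic (Vm m) (Em m)"
  unfolding subcubic_def
proof
  fix v assume "v \<in> Vm m"
  then have "v < 4*m+11" by (simp add: Vm_def)
  from decomp[OF this] show "card (nbhd (Vm m) (Em m) v) \<le> 3"
  proof (elim disjE exE conjE)
    assume "v \<le> 6"
    then have "v = 0 \<or> v = 1 \<or> v = 2 \<or> v = 3 \<or> v = 4 \<or> v = 5 \<or> v = 6" by auto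
    then show ?thesis
      using le3[OF nb_fixed(1)] le3[OF nb_fixed(2)] le3[OF nb_fixed(3)] le3[OF nb_fixed(4)]
        le3[OF nb_fixed(5)] le3[OF nb_fixed(6)] le3[OF nb_fixed(7)] by (elim disjE) simp_all
  next
    fix k assume k: "k \<le> m" "v = 7+4*k"
    show ?thesis
    proof (cases k)
      case 0 then show ?thesis using k le3[OF nb_c0] by simp
    next
      case (Suc j)
      then have "v = 11 + 4*j" using k by simp
      then show ?thesis using nb_c le3 by metis
    qed
  next
    fix k assume "v = 8+4*k" then show ?thesis using nb_z le3 by metis
  next
    fix k assume "k \<le> m" "v = 9+4*k" then show ?thesis using leaf1 le3 by (metis insert_absorb2 subset_refl)
  next
    fix k assume "k \<le> m" "v = 10+4*k" then show ?thesis using leaf2 le3 by (metis insert_absorb2 subset_refl)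
  qed
qed

lemma reach: "v < 4*m+11 \<Longrightarrow> (Em m)\<^sup>*\<^sup>* 0 v"
proof (induction v rule: less_induct)
  case (less v)
  have step: "(Em m)\<^sup>*\<^sup>* 0 v" if "w < v" "Em m w v" for w
    using less.IH[of w] that less.prems by (meson order.strict_trans rtranclp.rtrancl_into_rtrancl)
  from decomp[OF less.prems] show ?case
  proof (elim disjE exE conjE)
    assume "v \<le> 6"
    then have "v = 0 \<or> v = 1 \<or> v = 2 \<or> v = 3 \<or> v = 4 \<or> v = 5 \<or> v = 6" by auto
    then show ?thesis
    proof (elim disjE)
      assume "v = 0" then show ?thesis by simp
    next
      assume "v = 1" then show ?thesis by (intro step[of 0]) (simp_all add: Em_def Bm_def)
    next
      assume "v = 2" then show ?thesis by (intro step[of 0]) (simp_all add: Em_def Bm_def)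
    next
      assume "v = 3" then show ?thesis by (intro step[of 0]) (simp_all add: Em_def Bm_def)
    next
      assume "v = 4" then show ?thesis by (intro step[of 3]) (simp_all add: Em_def Bm_def)
    next
      assume "v = 5" then show ?thesis by (intro step[of 3]) (simp_all add: Em_def Bm_def)
    next
      assume "v = 6" then show ?thesis by (intro step[of 4]) (simp_all add: Em_def Bm_def)
    qed
  next
    fix k assume k: "k \<le> m" "v = 7+4*k"
    show ?thesis
    proof (cases k)
      case 0 then show ?thesis using k by (intro step[of 6]) (simp_all add: Em_def Bm_def)
    next
      case (Suc j)
      then have "v = 11 + 4*j" "j < m" using k by auto
      then show ?thesis using step[of "7+4*j"] par_c[of j m] by simp
    qed
  next
    fix k assume "k \<le> m" "v = 8+4*k" then show ?thesis using step[of "7+4*k"] par_z[of k m] by simp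
  next
    fix k assume "k \<le> m" "v = 9+4*k" then show ?thesis using step[of "8+4*k"] par_l1[of k m] by simp
  next
    fix k assume "k \<le> m" "v = 10+4*k" then show ?thesis using step[of "8+4*k"] par_l2[of k m] by simp
  qed
qed

lemma rtranclp_symm:
  assumes "\<And>u v. E u v \<Longrightarrow> E v u" and "E\<^sup>*\<^sup>* a b" shows "E\<^sup>*\<^sup>* b a"
  using assms(2)
proof (induction rule: rtranclp_induct)
  case base then show ?case by simp
next
  case (step y z)
  then show ?case using assms(1) by (meson converse_rtranclp_into_rtranclp)
qed

lemma conn: "connected_graph (Vm m) (Em m)"
  unfolding connected_graph_def
proof (intro conjI ballI)
  have "0 \<in> Vm m" unfolding Vm_def by simp
  then show "Vm m \<noteq> {}" by blast
next
  fix u v assume "u \<in> Vm m" "v \<in> Vm m"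
  then have "(Em m)\<^sup>*\<^sup>* 0 u" "(Em m)\<^sup>*\<^sup>* 0 v" using reach by (auto simp: Vm_def)
  moreover have "(Em m)\<^sup>*\<^sup>* u 0"
    by (rule rtranclp_symm[OF _ \<open>(Em m)\<^sup>*\<^sup>* 0 u\<close>]) (auto simp: Em_def)
  ultimately show "(Em m)\<^sup>*\<^sup>* u v" by (meson rtranclp_trans)
qed

lemma two_sub: "p \<noteq> q \<Longrightarrow> {p,q} \<subseteq> A \<Longrightarrow> finite A \<Longrightarrow> 2 \<le> card A"
  by (metis card_2_iff card_mono)

lemma two_sub': assumes "{p,q} \<subseteq> S \<inter> B" "p \<noteq> q" "finite B" shows "2 \<le> card (S \<inter> B)"
  using two_sub[OF assms(2,1)] assms(3) by simp

lemma cherry: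
  assumes ld: "locating_dominating V E S"
    and d: "l1 \<noteq> l2" "z \<noteq> l1" "z \<noteq> l2" and inV: "l1 \<in> V" "l2 \<in> V"
    and n1: "nbhd V E l1 = {z}" and n2: "nbhd V E l2 = {z}"
  shows "2 \<le> card (S \<inter> {z,l1,l2})"
proof -
  have c1: "closed_nbhd V E l1 = {l1,z}" and c2: "closed_nbhd V E l2 = {l2,z}"
    using n1 n2 by (auto simp: closed_nbhd_def)
  note ldd = ld[unfolded locating_dominating_def]
  note dom = conjunct1[OF conjunct2[OF ldd]]
  note loc = conjunct2[OF conjunct2[OF ldd]]
  have l12: "l1 \<in> S \<or> l2 \<in> S"
  proof (rule ccontr)
    assume h: "\<not> (l1 \<in> S \<or> l2 \<in> S)"
    then have "closed_nbhd V E l1 \<inter> S = closed_nbhd V E l2 \<inter> S" using c1 c2 by auto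
    moreover have "l1 \<in> V - S" "l2 \<in> V - S" using inV h by auto
    ultimately show False using loc[rule_format, of l1 l2] d(1) by simp
  qed
  have "{l1,z} \<inter> S \<noteq> {}" using bspec[OF dom inV(1)] c1 by simp
  then have z1: "l1 \<in> S \<or> z \<in> S" by blast
  have "{l2,z} \<inter> S \<noteq> {}" using bspec[OF dom inV(2)] c2 by simp
  then have z2: "l2 \<in> S \<or> z \<in> S" by blast
  show ?thesis
  proof (cases "l1 \<in> S")
    case T1: True
    show ?thesis
    proof (cases "l2 \<in> S")
      case True then show ?thesis using T1 d by (intro two_sub'[of l1 l2]) auto
    next
      case False then show ?thesis using T1 z2 d by (intro two_sub'[of z l1]) auto
    qed
  next
    case False then show ?thesis using l12 z1 d by (intro two_sub'[of z l2]) auto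
  qed
qed

lemma diamond:
  assumes ld: "locating_dominating V E S"
    and d: "a \<noteq> b" "a \<noteq> x" "a \<noteq> y" "b \<noteq> x" "b \<noteq> y" and inV: "a \<in> V" "b \<in> V"
    and n1: "nbhd V E a = {x,y}" and n2: "nbhd V E b = {x,y}"
  shows "2 \<le> card (S \<inter> {a,b,x,y})"
proof -
  have c1: "closed_nbhd V E a = {a,x,y}" and c2: "closed_nbhd V E b = {b,x,y}"
    using n1 n2 by (auto simp: closed_nbhd_def)
  note ldd = ld[unfolded locating_dominating_def]
  note dom = conjunct1[OF conjunct2[OF ldd]]
  note loc = conjunct2[OF conjunct2[OF ldd]]
  have ab: "a \<in> S \<or> b \<in> S"
  proof (rule ccontr)
    assume h: "\<not> (a \<in> S \<or> b \<in> S)"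
    then have "closed_nbhd V E a \<inter> S = closed_nbhd V E b \<inter> S" using c1 c2 by auto
    moreover have "a \<in> V - S" "b \<in> V - S" using inV h by auto
    ultimately show False using loc[rule_format, of a b] d(1) by simp
  qed
  have "{a,x,y} \<inter> S \<noteq> {}" using bspec[OF dom inV(1)] c1 by simp
  then have z1: "a \<in> S \<or> x \<in> S \<or> y \<in> S" by blast
  have "{b,x,y} \<inter> S \<noteq> {}" using bspec[OF dom inV(2)] c2 by simp
  then have z2: "b \<in> S \<or> x \<in> S \<or> y \<in> S" by blast
  show ?thesis
  proof (cases "a \<in> S")
    case T1: True
    show ?thesis
    proof (cases "b \<in> S")
      case True then show ?thesis using T1 d by (intro two_sub'[of a b]) auto
    next
      case False
      then have "x \<in> S \<or> y \<in> S" using z2 by simp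
      then show ?thesis
      proof
        assume "x \<in> S" then show ?thesis using T1 d by (intro two_sub'[of a x]) auto
      next
        assume "y \<in> S" then show ?thesis using T1 d by (intro two_sub'[of a y]) auto
      qed
    qed
  next
    case False
    then have T2: "b \<in> S" using ab by simp
    have "x \<in> S \<or> y \<in> S" using z1 False by simp
    then show ?thesis
    proof
      assume "x \<in> S" then show ?thesis using T2 d by (intro two_sub'[of b x]) auto
    next
      assume "y \<in> S" then show ?thesis using T2 d by (intro two_sub'[of b y]) auto
    qed
  qed
qed

definition Tm :: "nat \<Rightarrow> nat set" where "Tm i = {8+4*i, 9+4*i, 10+4*i}"

lemma lower:
  assumes ld: "locating_dominating (Vm m) (Em m) S"
  shows "2*m + 6 \<le> card S"
proof -
  have SV: "S \<subseteq> Vm m" using ld unfolding locating_dominating_def by simp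
  have finS: "finite S" using SV finite_subset unfolding Vm_def by blast
  have g1: "2 \<le> card (S \<inter> {0,1,2})"
    by (rule cherry[OF ld]) (auto simp: fixed_nb fixed_nb1 inVm)
  have g2: "2 \<le> card (S \<inter> {4,5,3,6})"
    by (rule diamond[OF ld]) (auto simp: fixed_nb fixed_nb1 inVm)
  have g3: "2 \<le> card (S \<inter> Tm i)" if "i \<in> {..m}" for i
    unfolding Tm_def using that
    by (intro cherry[OF ld]) (auto simp: leaf1 leaf2 inVm)
  have "(\<Sum>i\<in>{..m}. 2) \<le> (\<Sum>i\<in>{..m}. card (S \<inter> Tm i))"
    by (rule sum_mono) (rule g3)
  then have s3: "2*(m+1) \<le> (\<Sum>i\<in>{..m}. card (S \<inter> Tm i))" by simp
  have disjT: "\<forall>i\<in>{..m}. \<forall>j\<in>{..m}. i \<noteq> j \<longrightarrow> (S \<inter> Tm i) \<inter> (S \<inter> Tm j) = {}"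
    unfolding Tm_def by auto
  have u: "card (\<Union>i\<in>{..m}. S \<inter> Tm i) = (\<Sum>i\<in>{..m}. card (S \<inter> Tm i))"
    by (rule card_UN_disjoint) (use disjT finS in auto)
  define U where "U = (\<Union>i\<in>{..m}. S \<inter> Tm i)"
  have finU: "finite U" unfolding U_def using finS by auto
  have U8: "\<forall>x\<in>U. 8 \<le> x" unfolding U_def Tm_def by auto
  have d1: "(S \<inter> {0,1,2}) \<inter> (S \<inter> {4,5,3,6}) = {}" by auto
  have d2: "((S \<inter> {0,1,2}) \<union> (S \<inter> {4,5,3,6})) \<inter> U = {}" using U8 by fastforce
  have "card ((S \<inter> {0,1,2}) \<union> (S \<inter> {4,5,3,6}) \<union> U)
        = card (S \<inter> {0,1,2}) + card (S \<inter> {4,5,3,6}) + card U"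
    using d1 d2 finU finS by (simp add: card_Un_disjoint)
  moreover have "(S \<inter> {0,1,2}) \<union> (S \<inter> {4,5,3,6}) \<union> U \<subseteq> S" unfolding U_def by auto
  ultimately have "card (S \<inter> {0,1,2}) + card (S \<inter> {4,5,3,6}) + card U \<le> card S"
    using finS by (metis card_mono)
  moreover have "card U = (\<Sum>i\<in>{..m}. card (S \<inter> Tm i))" using u unfolding U_def .
  moreover have "\<And>a b c t s. a+b+c \<le> s \<Longrightarrow> c = t \<Longrightarrow> 2 \<le> a \<Longrightarrow> 2\<le>b \<Longrightarrow> 2*(m+1) \<le> t \<Longrightarrow> 2*m+6 \<le> (s::nat)"
    by presburger
  ultimately show ?thesis using g1 g2 s3 by blast
qed

lemma ld_V: "locating_dominating (Vm m) (Em m) (Vm m)"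
  unfolding locating_dominating_def closed_nbhd_def by auto

lemma ldnum: "2 * ld_number (Vm m) (Em m) > card (Vm m)"
proof -
  have ex: "\<exists>k S. locating_dominating (Vm m) (Em m) S \<and> card S = k" using ld_V by blast
  have "\<exists>S. locating_dominating (Vm m) (Em m) S \<and> card S = ld_number (Vm m) (Em m)"
    unfolding ld_number_def by (rule LeastI_ex[OF ex])
  then obtain S where "locating_dominating (Vm m) (Em m) S" "card S = ld_number (Vm m) (Em m)" by blast
  with lower[OF this(1)] have "2*m+6 \<le> ld_number (Vm m) (Em m)" by simp
  moreover have "card (Vm m) = 4*m+11" unfolding Vm_def by simp
  ultimately show ?thesis by simp
qed

lemma family: "\<exists>(V::nat set) E. simple_graph V E \<and> connected_graph V E \<and> subcubic V E \<and>
            card V \<ge> N \<and> (\<exists>u v. open_twins V E 1 u v) \<and> (\<exists>u v. open_twins V E 2 u v) \<and>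
            2 * ld_number V E > card V"
proof (intro exI conjI)
  show "simple_graph (Vm N) (Em N)" by (rule sg)
  show "connected_graph (Vm N) (Em N)" by (rule conn)
  show "subcubic (Vm N) (Em N)" by (rule subc)
  show "card (Vm N) \<ge> N" unfolding Vm_def by simp
  show "open_twins (Vm N) (Em N) 1 1 2" unfolding open_twins_def by (simp add: fixed_nb fixed_nb1 inVm)
  show "open_twins (Vm N) (Em N) 2 4 5" unfolding open_twins_def by (simp add: fixed_nb fixed_nb1 inVm)
  show "2 * ld_number (Vm N) (Em N) > card (Vm N)" by (rule ldnum)
qed

theorem proposition10:
  shows "(\<forall>N. \<exists>(V::nat set) E. simple_graph V E \<and> connected_graph V E \<and> subcubic V E \<and>
            card V \<ge> N \<and> (\<exists>u v. open_twins V E 1 u v) \<and>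
            2 * ld_number V E > card V)
       \<and> (\<forall>N. \<exists>(V::nat set) E. simple_graph V E \<and> connected_graph V E \<and> subcubic V E \<and>
            card V \<ge> N \<and> (\<exists>u v. open_twins V E 2 u v) \<and>
            2 * ld_number V E > card V)"
  using family by blast

end
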